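(* Let $d\geq 2$ and consider a $d$-level system with energies $E_1\leq E_2\leq\dots\leq E_d$. Fix inverse temperatures $\alpha>\beta\geq 0$ and let $\boldsymbol{\gamma}$, $\boldsymbol{\Gamma}$ be the corresponding Gibbs distributions, $\gamma_k=e^{-\alpha E_k}/\sum_{i=1}^d e^{-\alpha E_i}$ and $\Gamma_k=e^{-\beta E_k}/\sum_{i=1}^d e^{-\beta E_i}$. Let $\mathbf{p}$ be a $d$-dimensional probability vector and let $\mathbf{q}$ be any probability vector achievable from $\mathbf{p}$ by the fused operations $\mathcal{F}_{AB}$ (as defined in the context). Then $$q_d\leq M(\mathbf{p}):=\max\left\{p_d,\frac{\Gamma_d}{\Gamma_{d-1}}\right\}.$$ In particular, $M$ is a monotone of the resulting resource theory, i.e., $M(\mathbf{q})\leq M(\mathbf{p})$ whenever $\mathbf{q}$ is achievable from $\mathbf{p}$ via $\mathcal{F}_{AB}$.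
   Context: Incoherent states of the $d$-level system are represented by probability vectors $\mathbf{p}=(p_1,\dots,p_d)$ (occupations of the energy levels). Thermomajorisation relative to a full-support probability vector $\mathbf{g}$: let $\pi$ be a permutation of $\{1,\dots,d\}$ such that $p_{\pi_i}/g_{\pi_i}\geq p_{\pi_{i+1}}/g_{\pi_{i+1}}$ for all $i$; the thermomajorisation curve of $\mathbf{p}$ relative to $\mathbf{g}$ is the piecewise linear curve connecting the points $\left(\sum_{i=1}^j g_{\pi_i},\sum_{i=1}^j p_{\pi_i}\right)$, $j=0,\dots,d$ (with $j=0$ giving $(0,0)$). We write $\mathbf{p}\succ_{\mathbf{g}}\mathbf{q}$ if the curve of $\mathbf{p}$ is nowhere below that of $\mathbf{q}$; this characterises the existence of a thermal operation (at the temperature corresponding to $\mathbf{g}$) mapping $\mathbf{p}$ to $\mathbf{q}$. A state $\mathbf{q}$ is achievable from $\mathbf{p}$ via $\mathcal{F}_{AB}$ if it is a convex combination of vectors $\mathbf{r}$ for which there is a finite chain $\mathbf{p}=\mathbf{r}^{(0)}\succ_{\mathbf{g}_1}\mathbf{r}^{(1)}\succ_{\mathbf{g}_2}\dots\succ_{\mathbf{g}_n}\mathbf{r}^{(n)}=\mathbf{r}$ with each $\mathbf{g}_i\in\{\boldsymbol{\gamma},\boldsymbol{\Gamma}\}$ (i.e., alternately applying thermal operations with respect to the two temperatures). *)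

theory Defs
  imports Complex_Main
begin

text \<open>Vectors of a d-level system are functions nat => real; only the entries
  at indices 1..d are meaningful.\<close>

definition prob_vec :: "nat \<Rightarrow> (nat \<Rightarrow> real) \<Rightarrow> bool" where
  "prob_vec d p \<longleftrightarrow> (\<forall>i\<in>{1..d}. 0 \<le> p i) \<and> (\<Sum>i=1..d. p i) = 1"

definition gibbs :: "nat \<Rightarrow> (nat \<Rightarrow> real) \<Rightarrow> real \<Rightarrow> nat \<Rightarrow> real" where
  "gibbs d E b k = exp (- b * E k) / (\<Sum>i=1..d. exp (- b * E i))"

definition sorting_perm :: "nat \<Rightarrow> (nat \<Rightarrow> real) \<Rightarrow> (nat \<Rightarrow> real) \<Rightarrow> (nat \<Rightarrow> nat) \<Rightarrow> bool" where
  "sorting_perm d g p \<pi> \<longleftrightarrow> bij_betw \<pi> {1..d} {1..d} \<and>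
     (\<forall>i\<in>{1..<d}. p (\<pi> i) / g (\<pi> i) \<ge> p (\<pi> (Suc i)) / g (\<pi> (Suc i)))"

definition curve_x :: "(nat \<Rightarrow> real) \<Rightarrow> (nat \<Rightarrow> nat) \<Rightarrow> nat \<Rightarrow> real" where
  "curve_x g \<pi> j = (\<Sum>i=1..j. g (\<pi> i))"

definition curve_y :: "(nat \<Rightarrow> real) \<Rightarrow> (nat \<Rightarrow> nat) \<Rightarrow> nat \<Rightarrow> real" where
  "curve_y p \<pi> j = (\<Sum>i=1..j. p (\<pi> i))"

definition on_curve_segment :: "(nat \<Rightarrow> real) \<Rightarrow> (nat \<Rightarrow> real) \<Rightarrow> (nat \<Rightarrow> nat) \<Rightarrow> nat \<Rightarrow> real \<Rightarrow> bool" where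
  "on_curve_segment g p \<pi> j x \<longleftrightarrow> curve_x g \<pi> (j - 1) \<le> x \<and> x \<le> curve_x g \<pi> j"

definition curve_val :: "(nat \<Rightarrow> real) \<Rightarrow> (nat \<Rightarrow> real) \<Rightarrow> (nat \<Rightarrow> nat) \<Rightarrow> nat \<Rightarrow> real \<Rightarrow> real" where
  "curve_val g p \<pi> j x = curve_y p \<pi> (j - 1) +
     (x - curve_x g \<pi> (j - 1)) / (curve_x g \<pi> j - curve_x g \<pi> (j - 1))
       * (curve_y p \<pi> j - curve_y p \<pi> (j - 1))"

definition thermo_maj :: "nat \<Rightarrow> (nat \<Rightarrow> real) \<Rightarrow> (nat \<Rightarrow> real) \<Rightarrow> (nat \<Rightarrow> real) \<Rightarrow> bool" where
  "thermo_maj d g p q \<longleftrightarrow>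
     (\<forall>\<pi> \<sigma>. sorting_perm d g p \<pi> \<longrightarrow> sorting_perm d g q \<sigma> \<longrightarrow>
        (\<forall>j\<in>{1..d}. \<forall>k\<in>{1..d}. \<forall>x.
           on_curve_segment g p \<pi> j x \<longrightarrow> on_curve_segment g q \<sigma> k x \<longrightarrow>
           curve_val g q \<sigma> k x \<le> curve_val g p \<pi> j x))"

inductive chain_reach :: "nat \<Rightarrow> (nat \<Rightarrow> real) \<Rightarrow> (nat \<Rightarrow> real) \<Rightarrow> (nat \<Rightarrow> real) \<Rightarrow> (nat \<Rightarrow> real) \<Rightarrow> bool"
  for d g1 g2 p where
  refl: "chain_reach d g1 g2 p p"
| step: "chain_reach d g1 g2 p r \<Longrightarrow> prob_vec d s \<Longrightarrow>
         thermo_maj d g1 r s \<or> thermo_maj d g2 r s \<Longrightarrow> chain_reach d g1 g2 p s"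

definition achievable_FAB :: "nat \<Rightarrow> (nat \<Rightarrow> real) \<Rightarrow> (nat \<Rightarrow> real) \<Rightarrow> (nat \<Rightarrow> real) \<Rightarrow> (nat \<Rightarrow> real) \<Rightarrow> bool" where
  "achievable_FAB d g1 g2 p q \<longleftrightarrow>
     (\<exists>(n::nat) (w::nat \<Rightarrow> real) (r::nat \<Rightarrow> nat \<Rightarrow> real).
        (\<forall>m<n. 0 \<le> w m \<and> chain_reach d g1 g2 p (r m)) \<and> (\<Sum>m<n. w m) = 1 \<and>
        (\<forall>i\<in>{1..d}. q i = (\<Sum>m<n. w m * r m i)))"

definition M_mono :: "nat \<Rightarrow> (nat \<Rightarrow> real) \<Rightarrow> (nat \<Rightarrow> real) \<Rightarrow> real" where
  "M_mono d \<Gamma> p = max (p d) (\<Gamma> d / \<Gamma> (d - 1))"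

end

theory Submission
  imports Defs
begin

lemma sorting_perm_exists:
  "\<exists>\<pi>. sorting_perm d g p \<pi>"
proof -
  define f where "f = (\<lambda>i. - (p i / g i))"
  define xs where "xs = sort_key f [1..<Suc d]"
  define \<pi> where "\<pi> = (\<lambda>i. xs ! (i - 1))"
  have len: "length xs = d" by (simp add: xs_def)
  have dist: "distinct xs" by (simp add: xs_def)
  have setx: "set xs = {1..d}" by (auto simp: xs_def)
  have srt: "sorted (map f xs)" by (simp add: xs_def)
  have inj: "inj_on \<pi> {1..d}"
    unfolding inj_on_def \<pi>_def using dist len
    by (auto simp: nth_eq_iff_index_eq)
  have img: "\<pi> ` {1..d} = {1..d}"
  proof
    show "\<pi> ` {1..d} \<subseteq> {1..d}"
    proof
      fix y assume "y \<in> \<pi> ` {1..d}"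
      then obtain i where i: "i \<in> {1..d}" "y = xs ! (i - 1)" by (auto simp: \<pi>_def)
      then have "i - 1 < length xs" using len by auto
      then have "xs ! (i - 1) \<in> set xs" by (rule nth_mem)
      then show "y \<in> {1..d}" using i setx by simp
    qed
  next
    show "{1..d} \<subseteq> \<pi> ` {1..d}"
    proof
      fix y assume "y \<in> {1..d}"
      then obtain k where k: "k < d" "xs ! k = y" using setx len by (metis in_set_conv_nth)
      then have "\<pi> (Suc k) = y" by (simp add: \<pi>_def)
      then show "y \<in> \<pi> ` {1..d}" using k by force
    qed
  qed
  have mono: "p (\<pi> (Suc i)) / g (\<pi> (Suc i)) \<le> p (\<pi> i) / g (\<pi> i)" if "i \<in> {1..<d}" for i
  proof -
    have "map f xs ! (i - 1) \<le> map f xs ! i"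
      using sorted_nth_mono[OF srt, of "i - 1" i] that len by auto
    moreover have "i - 1 < length xs" using that len by auto
    ultimately show ?thesis using that len by (simp add: \<pi>_def f_def)
  qed
  show ?thesis unfolding sorting_perm_def bij_betw_def using inj img mono by blast
qed

lemma curve_x_0[simp]: "curve_x g \<pi> 0 = 0" by (simp add: curve_x_def)
lemma curve_y_0[simp]: "curve_y g \<pi> 0 = 0" by (simp add: curve_y_def)
lemma curve_x_Suc: "curve_x g \<pi> (Suc j) = curve_x g \<pi> j + g (\<pi> (Suc j))"
  by (simp add: curve_x_def)
lemma curve_y_Suc: "curve_y g \<pi> (Suc j) = curve_y g \<pi> j + g (\<pi> (Suc j))"
  by (simp add: curve_y_def)

lemma p_side:
  assumes sp: "sorting_perm d g p \<pi>" and d: "d \<ge> 2"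
    and gpos: "\<And>i. i \<in> {1..d} \<Longrightarrow> g i > 0"
    and gd: "\<And>i. i \<in> {1..d} \<Longrightarrow> g d \<le> g i"
    and gd1: "\<And>i. i \<in> {1..d-1} \<Longrightarrow> g (d-1) \<le> g i"
    and pv: "prob_vec d p"
  shows "on_curve_segment g p \<pi> 1 (g d) \<and> curve_val g p \<pi> 1 (g d) \<le> max (p d) (g d / g (d - 1))"
proof -
  have b: "bij_betw \<pi> {1..d} {1..d}" using sp by (simp add: sorting_perm_def)
  have p1: "\<pi> 1 \<in> {1..d}" using bij_betwE[OF b] d by auto
  have x1: "curve_x g \<pi> 1 = g (\<pi> 1)" by (simp add: curve_x_def)
  have y1: "curve_y p \<pi> 1 = p (\<pi> 1)" by (simp add: curve_y_def)
  have pge: "\<And>i. i \<in> {1..d} \<Longrightarrow> 0 \<le> p i" using pv by (simp add: prob_vec_def)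
  have ple: "p i \<le> 1" if "i \<in> {1..d}" for i
  proof -
    have "p i \<le> (\<Sum>j=1..d. p j)"
      using that pge by (intro member_le_sum) auto
    then show ?thesis using pv by (simp add: prob_vec_def)
  qed
  have seg: "on_curve_segment g p \<pi> 1 (g d)"
    unfolding on_curve_segment_def using x1 gd[OF p1] gpos[of d] d by simp
  have cv: "curve_val g p \<pi> 1 (g d) = g d / g (\<pi> 1) * p (\<pi> 1)"
    unfolding curve_val_def using x1 y1 by simp
  have "g d / g (\<pi> 1) * p (\<pi> 1) \<le> max (p d) (g d / g (d - 1))"
  proof (cases "\<pi> 1 = d")
    case True then show ?thesis using gpos[of d] d by simp
  next
    case False
    then have i: "\<pi> 1 \<in> {1..d-1}" using p1 by auto
    have g1: "g (d-1) > 0" using gpos[of "d-1"] d by auto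
    have "g d / g (\<pi> 1) * p (\<pi> 1) \<le> g d / g (\<pi> 1)"
      using ple[OF p1] pge[OF p1] gpos[OF p1] gpos[of d] d
      by (intro mult_right_le_one_le) auto
    also have "\<dots> \<le> g d / g (d - 1)"
      using gd1[OF i] g1 gpos[of d] d by (intro divide_left_mono) auto
    finally show ?thesis by simp
  qed
  then show ?thesis using seg cv by simp
qed

lemma q_side:
  assumes sp: "sorting_perm d g q \<sigma>" and d: "d \<ge> 2"
    and gpos: "\<And>i. i \<in> {1..d} \<Longrightarrow> g i > 0"
    and qge: "\<And>i. i \<in> {1..d} \<Longrightarrow> 0 \<le> q i"
  shows "\<exists>k\<in>{1..d}. on_curve_segment g q \<sigma> k (g d) \<and> q d \<le> curve_val g q \<sigma> k (g d)"
proof -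
  have b: "bij_betw \<sigma> {1..d} {1..d}" using sp by (simp add: sorting_perm_def)
  have srt: "\<And>i. i \<in> {1..<d} \<Longrightarrow> q (\<sigma> (Suc i)) / g (\<sigma> (Suc i)) \<le> q (\<sigma> i) / g (\<sigma> i)"
    using sp by (simp add: sorting_perm_def)
  have sin: "\<And>i. i \<in> {1..d} \<Longrightarrow> \<sigma> i \<in> {1..d}" using bij_betwE[OF b] by blast
  have "d \<in> \<sigma> ` {1..d}" using bij_betw_imp_surj_on[OF b] d by auto
  then obtain K where K: "K \<in> {1..d}" "\<sigma> K = d" by auto
  define c where "c = q d / g d"
  have gd: "g d > 0" using gpos d by auto
  have ratio: "c \<le> q (\<sigma> i) / g (\<sigma> i)" if "1 \<le> i" "i \<le> K" for i
    using that(2)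
  proof (induction i rule: inc_induct)
    case base then show ?case using K by (simp add: c_def)
  next
    case (step n)
    have "n \<in> {1..<d}" using step.hyps that(1) K by auto
    then show ?case using srt[of n] step.IH by linarith
  qed
  have trm: "c * g (\<sigma> i) \<le> q (\<sigma> i)" if "1 \<le> i" "i \<le> K" for i
  proof -
    have "g (\<sigma> i) > 0" using gpos sin that K by auto
    then show ?thesis using ratio[OF that] by (simp add: pos_le_divide_eq)
  qed
  have ylow: "c * curve_x g \<sigma> j \<le> curve_y q \<sigma> j" if "j \<le> K" for j
    unfolding curve_x_def curve_y_def sum_distrib_left
    using that trm by (intro sum_mono) auto
  have xnn: "0 \<le> curve_x g \<sigma> j" if "j \<le> d" for j
    unfolding curve_x_def using that gpos sin
    by (intro sum_nonneg) (smt (verit) atLeastAtMost_iff order_trans)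
  have xK: "g d \<le> curve_x g \<sigma> K"
  proof -
    obtain m where m: "K = Suc m" using K by (cases K) auto
    have "curve_x g \<sigma> K = curve_x g \<sigma> m + g d" using m K by (simp add: curve_x_Suc)
    then show ?thesis using xnn[of m] m K by auto
  qed
  define k where "k = (LEAST j. g d \<le> curve_x g \<sigma> j)"
  have kK: "k \<le> K" unfolding k_def using xK by (rule Least_le)
  have xk: "g d \<le> curve_x g \<sigma> k" unfolding k_def using xK by (rule LeastI)
  have k0: "k \<noteq> 0" using xk gd by (cases k) auto
  then obtain m where m: "k = Suc m" by (cases k) auto
  have xm: "curve_x g \<sigma> m < g d"
    using not_less_Least[of m "\<lambda>j. g d \<le> curve_x g \<sigma> j"] m by (simp add: k_def)
  have kd: "k \<in> {1..d}" using kK K m by auto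
  have gk: "g (\<sigma> k) > 0" using gpos sin kd by auto
  have seg: "on_curve_segment g q \<sigma> k (g d)"
    unfolding on_curve_segment_def using m xm xk by simp
  have cv: "curve_val g q \<sigma> k (g d) = curve_y q \<sigma> m + (g d - curve_x g \<sigma> m) / g (\<sigma> k) * q (\<sigma> k)"
    unfolding curve_val_def using m by (simp add: curve_x_Suc curve_y_def)
  have r: "c \<le> q (\<sigma> k) / g (\<sigma> k)" using ratio kK m by auto
  have "(g d - curve_x g \<sigma> m) * c \<le> (g d - curve_x g \<sigma> m) * (q (\<sigma> k) / g (\<sigma> k))"
    using r xm by (intro mult_left_mono) auto
  also have "\<dots> = (g d - curve_x g \<sigma> m) / g (\<sigma> k) * q (\<sigma> k)" by simp
  finally have t2: "(g d - curve_x g \<sigma> m) * c \<le> (g d - curve_x g \<sigma> m) / g (\<sigma> k) * q (\<sigma> k)" .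
  have t1: "c * curve_x g \<sigma> m \<le> curve_y q \<sigma> m" using ylow kK m by auto
  have "q d = c * g d" using gd by (simp add: c_def)
  also have "\<dots> = c * curve_x g \<sigma> m + (g d - curve_x g \<sigma> m) * c" by (simp add: algebra_simps)
  also have "\<dots> \<le> curve_val g q \<sigma> k (g d)" using t1 t2 cv by linarith
  finally show ?thesis using seg kd by blast
qed

lemma main_step:
  assumes d: "d \<ge> 2"
    and gpos: "\<And>i. i \<in> {1..d} \<Longrightarrow> g i > 0"
    and gd: "\<And>i. i \<in> {1..d} \<Longrightarrow> g d \<le> g i"
    and gd1: "\<And>i. i \<in> {1..d-1} \<Longrightarrow> g (d-1) \<le> g i"
    and pv: "prob_vec d p" and qv: "prob_vec d q" and tm: "thermo_maj d g p q"
  shows "q d \<le> max (p d) (g d / g (d - 1))"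
proof -
  obtain \<pi> where \<pi>: "sorting_perm d g p \<pi>" using sorting_perm_exists by blast
  obtain \<sigma> where \<sigma>: "sorting_perm d g q \<sigma>" using sorting_perm_exists by blast
  have A: "on_curve_segment g p \<pi> 1 (g d) \<and> curve_val g p \<pi> 1 (g d) \<le> max (p d) (g d / g (d - 1))"
    by (rule p_side[OF \<pi> d gpos gd gd1 pv])
  have qge: "\<And>i. i \<in> {1..d} \<Longrightarrow> 0 \<le> q i" using qv by (simp add: prob_vec_def)
  obtain k where k: "k \<in> {1..d}" "on_curve_segment g q \<sigma> k (g d)" "q d \<le> curve_val g q \<sigma> k (g d)"
    using q_side[OF \<sigma> d gpos qge] by blast
  have "curve_val g q \<sigma> k (g d) \<le> curve_val g p \<pi> 1 (g d)"
    using tm \<pi> \<sigma> k A d unfolding thermo_maj_def by auto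
  then show ?thesis using A k by linarith
qed

lemma gibbs_props:
  assumes d: "d \<ge> 2"
    and E: "\<And>i j. i \<in> {1..d} \<Longrightarrow> j \<in> {1..d} \<Longrightarrow> i \<le> j \<Longrightarrow> E i \<le> E j"
    and b: "b \<ge> 0"
  shows "\<And>i. gibbs d E b i > 0"
    and "\<And>i. i \<in> {1..d} \<Longrightarrow> gibbs d E b d \<le> gibbs d E b i"
    and "\<And>i. i \<in> {1..d-1} \<Longrightarrow> gibbs d E b (d-1) \<le> gibbs d E b i"
    and "gibbs d E b d / gibbs d E b (d-1) = exp (b * (E (d-1) - E d))"
proof -
  define Z where "Z = (\<Sum>i=1..d. exp (- b * E i))"
  have Z: "Z > 0" unfolding Z_def using d by (intro sum_pos) auto
  have g: "\<And>i. gibbs d E b i = exp (- b * E i) / Z" by (simp add: gibbs_def Z_def)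
  show "\<And>i. gibbs d E b i > 0" using Z g by simp
  show "gibbs d E b d \<le> gibbs d E b i" if "i \<in> {1..d}" for i
  proof -
    have "E i \<le> E d" using E[of i d] that d by auto
    then have "- b * E d \<le> - b * E i" using b by (simp add: mult_left_mono)
    then show ?thesis using g Z by (simp add: divide_right_mono)
  qed
  show "gibbs d E b (d-1) \<le> gibbs d E b i" if "i \<in> {1..d-1}" for i
  proof -
    have "E i \<le> E (d-1)" using E[of i "d-1"] that d by auto
    then have "- b * E (d-1) \<le> - b * E i" using b by (simp add: mult_left_mono)
    then show ?thesis using g Z by (simp add: divide_right_mono)
  qed
  show "gibbs d E b d / gibbs d E b (d-1) = exp (b * (E (d-1) - E d))"
    using g Z by (simp add: exp_diff[symmetric] algebra_simps)
qed

lemma chain_bound: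
  assumes "chain_reach d g1 g2 p r" and "prob_vec d p"
    and H: "\<And>r s. prob_vec d r \<Longrightarrow> prob_vec d s \<Longrightarrow> thermo_maj d g1 r s \<or> thermo_maj d g2 r s \<Longrightarrow> s d \<le> max (r d) R"
  shows "prob_vec d r \<and> r d \<le> max (p d) R"
  using assms(1)
proof (induction rule: chain_reach.induct)
  case refl then show ?case using assms(2) by simp
next
  case (step r s)
  then have "s d \<le> max (r d) R" using H by blast
  then show ?case using step by auto
qed

theorem theorem1:
  fixes d :: nat and E p q :: "nat \<Rightarrow> real" and \<alpha> \<beta> :: real
  assumes "d \<ge> 2"
    and "\<And>i j. i \<in> {1..d} \<Longrightarrow> j \<in> {1..d} \<Longrightarrow> i \<le> j \<Longrightarrow> E i \<le> E j"
    and "\<alpha> > \<beta>" and "\<beta> \<ge> 0"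
    and "prob_vec d p"
    and "achievable_FAB d (gibbs d E \<alpha>) (gibbs d E \<beta>) p q"
  shows "q d \<le> max (p d) (gibbs d E \<beta> d / gibbs d E \<beta> (d - 1)) \<and>
         M_mono d (gibbs d E \<beta>) q \<le> M_mono d (gibbs d E \<beta>) p"
proof -
  note d = assms(1) and E = assms(2)
  define R where "R = gibbs d E \<beta> d / gibbs d E \<beta> (d - 1)"
  have a0: "\<alpha> \<ge> 0" using assms(3,4) by linarith
  note GA = gibbs_props[OF d E a0] and GB = gibbs_props[OF d E assms(4)]
  have Edd: "E (d-1) - E d \<le> 0" using E[of "d-1" d] d by auto
  have "\<alpha> * (E (d-1) - E d) \<le> \<beta> * (E (d-1) - E d)"
    using Edd assms(3) by (intro mult_right_mono_neg) auto
  then have rat: "gibbs d E \<alpha> d / gibbs d E \<alpha> (d - 1) \<le> R"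
  proof -
    have "gibbs d E \<alpha> d / gibbs d E \<alpha> (d-1) = exp (\<alpha> * (E (d-1) - E d))" by (rule GA(4))
    moreover have "gibbs d E \<beta> d / gibbs d E \<beta> (d-1) = exp (\<beta> * (E (d-1) - E d))" by (rule GB(4))
    ultimately show ?thesis unfolding R_def using \<open>\<alpha> * (E (d-1) - E d) \<le> \<beta> * (E (d-1) - E d)\<close> by simp
  qed
  have H: "s d \<le> max (r d) R"
    if "prob_vec d r" "prob_vec d s" "thermo_maj d (gibbs d E \<alpha>) r s \<or> thermo_maj d (gibbs d E \<beta>) r s" for r s
    using that(3)
  proof
    assume "thermo_maj d (gibbs d E \<alpha>) r s"
    from main_step[OF d _ _ _ that(1,2) this] GA rat
    show ?thesis by fastforce
  next
    assume "thermo_maj d (gibbs d E \<beta>) r s"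
    from main_step[OF d _ _ _ that(1,2) this] GB
    show ?thesis unfolding R_def by fastforce
  qed
  obtain n :: nat and w :: "nat \<Rightarrow> real" and r :: "nat \<Rightarrow> nat \<Rightarrow> real" where nwr: "\<forall>m<n. 0 \<le> w m \<and> chain_reach d (gibbs d E \<alpha>) (gibbs d E \<beta>) p (r m)"
    "(\<Sum>m<n. w m) = 1" "\<forall>i\<in>{1..d}. q i = (\<Sum>m<n. w m * r m i)"
    using assms(6) unfolding achievable_FAB_def by blast
  have rb: "r m d \<le> max (p d) R" if "m < n" for m
    using chain_bound[of d "gibbs d E \<alpha>" "gibbs d E \<beta>" p "r m" R] nwr(1) that assms(5) H by blast
  have "q d = (\<Sum>m<n. w m * r m d)" using nwr(3) d by auto
  also have "\<dots> \<le> (\<Sum>m<n. w m * max (p d) R)"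
    using nwr(1) rb by (intro sum_mono mult_left_mono) auto
  also have "\<dots> = max (p d) R" using nwr(2) by (simp add: sum_distrib_right[symmetric])
  finally have qd: "q d \<le> max (p d) R" .
  then show ?thesis unfolding M_mono_def R_def by simp
qed

end
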